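(* Let $G$ be an abelian group with identity $\varepsilon$ and $R$ a commutative ring with identity. Then $\phi=(\phi_g,Y_g,Y_\varepsilon)_{g\in G}$ is a partial action of $G$ on $Y_\varepsilon$, the isomorphism $\Psi$ (with $\Psi(P_E)=Q_E$) satisfies $\phi_g\circ\Psi=\Psi\circ\alpha_g$ on $D_{g^{-1}}$ for all $g\in G$, and consequently there is an isomorphism of algebras $$P(G)=A_\varepsilon\rtimes_\alpha G\ \cong\ C_R(Y_\varepsilon)\rtimes_\phi G.$$
   Context: $A$ is the commutative $R$-algebra generated by symbols $P_E$ ($E$ finite subsets of $G$) subject to $P_EP_F=P_{E\cup F}$, with identity $P_\emptyset$; $A_\varepsilon=P_{\{\varepsilon\}}A=\operatorname{span}\{P_E:\varepsilon\in E\}$; $D_g=\operatorname{span}_R\{P_E:\varepsilon,g\in E\}$ (an ideal of $A_\varepsilon$); $\alpha_g:D_{g^{-1}}\to D_g$, $\alpha_g(P_E)=P_{gE}$, giving a partial action $\alpha=(\alpha_g,D_g,A_\varepsilon)$ of $G$ on $A_\varepsilon$. $Y=\prod_{g\in G}\{0,1\}$ with product topology, $Y_\varepsilon=\{x:x_\varepsilon=1\}$, $Y_g=\{x\in Y_\varepsilon: x_g=1\}$, $\phi_g:Y_{g^{-1}}\to Y_g$, $\phi_g((x_h)_h)=(x_{g^{-1}h})_h$; the induced action on functions is $\phi_g(f)=f\circ\phi_{g^{-1}}$ from $C_R(Y_{g^{-1}})$ to $C_R(Y_g)$ ($C_R(\cdot)$: locally constant compactly supported $R$-valued functions). $Q_E=\prod_{g\in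 E}Q_g$ with $Q_g(x)=x_g$, and $\Psi:A\to C_R(Y)$, $P_E\mapsto Q_E$. A partial action of a group on a space/algebra: sets/ideals $X_g$, bijections/isomorphisms $\phi_g:X_{g^{-1}}\to X_g$ with $X_\varepsilon=X$, $\phi_\varepsilon=\operatorname{id}$, $\phi_g(X_{g^{-1}}\cap X_h)=X_g\cap X_{gh}$, $\phi_g\phi_h=\phi_{gh}$ on $X_{h^{-1}}\cap X_{h^{-1}g^{-1}}$. For a partial action $(\beta_g,B_g,B)$ on an algebra, $B\rtimes_\beta G$ is the set of finite sums $\sum b_g\delta_g$, $b_g\in B_g$, with $(b_g\delta_g)(c_h\delta_h)=\beta_g(\beta_{g^{-1}}(b_g)c_h)\delta_{gh}$. *)

theory Defs
  imports "HOL-Analysis.Analysis"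
begin

text \<open>Conventions. The abelian group G is a type of class ab_group_add, written additively
  (identity 0 = epsilon, inverse uminus, product g h = g + h). R is a type of class comm_ring_1.\<close>

text \<open>A is the semilattice algebra R[(finite subsets of G, union)]: elements are finitely supported
  functions from finite subsets of G to R; P_E is the indicator of E; the product is the
  R-bilinear extension of P_E P_F = P_(E union F).\<close>

definition A_supp :: "('g set \<Rightarrow> 'r::zero) \<Rightarrow> 'g set set" where
  "A_supp a = {E. a E \<noteq> 0}"

definition A_carrier :: "('g set \<Rightarrow> 'r::comm_ring_1) set" where
  "A_carrier = {a. finite (A_supp a) \<and> (\<forall>E \<in> A_supp a. finite E)}"

definition P :: "'g set \<Rightarrow> ('g set \<Rightarrow> 'r::comm_ring_1)" where
  "P E = (\<lambda>F. if F = E then 1 else 0)"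

definition A_mult :: "('g set \<Rightarrow> 'r::comm_ring_1) \<Rightarrow> ('g set \<Rightarrow> 'r) \<Rightarrow> ('g set \<Rightarrow> 'r)" where
  "A_mult a b = (\<lambda>H. \<Sum>(E, F) \<in> {(E, F). E \<in> A_supp a \<and> F \<in> A_supp b \<and> E \<union> F = H}. a E * b F)"

text \<open>A_eps = P_{eps} A = span{P_E : eps in E}\<close>
definition A_eps :: "('g::ab_group_add set \<Rightarrow> 'r::comm_ring_1) set" where
  "A_eps = {a \<in> A_carrier. \<forall>E \<in> A_supp a. 0 \<in> E}"

definition D :: "'g::ab_group_add \<Rightarrow> ('g set \<Rightarrow> 'r::comm_ring_1) set" where
  "D g = {a \<in> A_carrier. \<forall>E \<in> A_supp a. 0 \<in> E \<and> g \<in> E}"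

text \<open>alpha_g (P_E) = P_(gE), extended linearly\<close>
definition alpha :: "'g::ab_group_add \<Rightarrow> ('g set \<Rightarrow> 'r::comm_ring_1) \<Rightarrow> ('g set \<Rightarrow> 'r)" where
  "alpha g a = (\<lambda>F. a ((\<lambda>h. - g + h) ` F))"

text \<open>Y is the type 'g \<Rightarrow> bool with the product topology (bool carries the discrete topology).\<close>

definition Y_eps :: "('g::ab_group_add \<Rightarrow> bool) set" where
  "Y_eps = {x. x 0}"

definition Yg :: "'g::ab_group_add \<Rightarrow> ('g \<Rightarrow> bool) set" where
  "Yg g = {x \<in> Y_eps. x g}"

definition phi :: "'g::ab_group_add \<Rightarrow> ('g \<Rightarrow> bool) \<Rightarrow> ('g \<Rightarrow> bool)" where
  "phi g x = (\<lambda>h. x (- g + h))"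

definition is_partial_action ::
  "'a set \<Rightarrow> ('g::ab_group_add \<Rightarrow> 'a set) \<Rightarrow> ('g \<Rightarrow> 'a \<Rightarrow> 'a) \<Rightarrow> bool" where
  "is_partial_action X XX f \<longleftrightarrow>
     (\<forall>g. XX g \<subseteq> X) \<and>
     (\<forall>g. bij_betw (f g) (XX (- g)) (XX g)) \<and>
     XX 0 = X \<and>
     (\<forall>x \<in> X. f 0 x = x) \<and>
     (\<forall>g h. f g ` (XX (- g) \<inter> XX h) = XX g \<inter> XX (g + h)) \<and>
     (\<forall>g h. \<forall>x \<in> XX (- h) \<inter> XX (- h + - g). f g (f h x) = f (g + h) x)"

text \<open>C_R(X) for X a subset of Y: functions on X (represented as functions on Y vanishing
  outside X) that are locally constant on X (subspace topology) and have compact support in X.\<close>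
definition C_R :: "('g \<Rightarrow> bool) set \<Rightarrow> (('g \<Rightarrow> bool) \<Rightarrow> 'r::comm_ring_1) set" where
  "C_R X = {f. (\<forall>x. x \<notin> X \<longrightarrow> f x = 0) \<and>
              (\<forall>x \<in> X. \<exists>U. open U \<and> x \<in> U \<and> (\<forall>y \<in> U \<inter> X. f y = f x)) \<and>
              (\<exists>K. compact K \<and> K \<subseteq> X \<and> {x \<in> X. f x \<noteq> 0} \<subseteq> K)}"

definition phi_fun :: "'g::ab_group_add \<Rightarrow> (('g \<Rightarrow> bool) \<Rightarrow> 'r::comm_ring_1) \<Rightarrow> (('g \<Rightarrow> bool) \<Rightarrow> 'r)" where
  "phi_fun g f = (\<lambda>x. if x \<in> Yg g then f (phi (- g) x) else 0)"

definition fun_mult :: "(('g \<Rightarrow> bool) \<Rightarrow> 'r::comm_ring_1) \<Rightarrow> (('g \<Rightarrow> bool) \<Rightarrow> 'r) \<Rightarrow> (('g \<Rightarrow> bool) \<Rightarrow> 'r)" where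
  "fun_mult f h = (\<lambda>x. f x * h x)"

definition Q :: "'g set \<Rightarrow> (('g \<Rightarrow> bool) \<Rightarrow> 'r::comm_ring_1)" where
  "Q E = (\<lambda>x. \<Prod>h \<in> E. if x h then 1 else 0)"

definition Psi :: "('g set \<Rightarrow> 'r::comm_ring_1) \<Rightarrow> (('g \<Rightarrow> bool) \<Rightarrow> 'r)" where
  "Psi a = (\<lambda>x. \<Sum>E \<in> A_supp a. a E * Q E x)"

text \<open>For a partial action (beta_g, B_g, B) on an algebra of R-valued functions on a set,
  B \<rtimes>_beta G is the set of finite formal sums sum_g b_g delta_g with b_g in B_g, represented
  as finitely supported maps g \<mapsto> b_g. Addition and R-scalar multiplication are componentwise;
  (b_g delta_g)(c_h delta_h) = beta_g(beta_{g^-1}(b_g) c_h) delta_{gh}.\<close>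

definition cp_carrier :: "('g \<Rightarrow> ('x \<Rightarrow> 'r::comm_ring_1) set) \<Rightarrow> ('g \<Rightarrow> ('x \<Rightarrow> 'r)) set" where
  "cp_carrier B = {u. finite {g. u g \<noteq> (\<lambda>_. 0)} \<and> (\<forall>g. u g \<in> B g)}"

definition cp_add :: "('g \<Rightarrow> ('x \<Rightarrow> 'r::comm_ring_1)) \<Rightarrow> ('g \<Rightarrow> ('x \<Rightarrow> 'r)) \<Rightarrow> ('g \<Rightarrow> ('x \<Rightarrow> 'r))" where
  "cp_add u v = (\<lambda>g x. u g x + v g x)"

definition cp_smul :: "'r::comm_ring_1 \<Rightarrow> ('g \<Rightarrow> ('x \<Rightarrow> 'r)) \<Rightarrow> ('g \<Rightarrow> ('x \<Rightarrow> 'r))" where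
  "cp_smul r u = (\<lambda>g x. r * u g x)"

definition cp_mult ::
  "(('x \<Rightarrow> 'r::comm_ring_1) \<Rightarrow> ('x \<Rightarrow> 'r) \<Rightarrow> ('x \<Rightarrow> 'r)) \<Rightarrow> ('g::ab_group_add \<Rightarrow> ('x \<Rightarrow> 'r) \<Rightarrow> ('x \<Rightarrow> 'r))
   \<Rightarrow> ('g \<Rightarrow> ('x \<Rightarrow> 'r)) \<Rightarrow> ('g \<Rightarrow> ('x \<Rightarrow> 'r)) \<Rightarrow> ('g \<Rightarrow> ('x \<Rightarrow> 'r))" where
  "cp_mult mul beta u v =
     (\<lambda>k x. \<Sum>g \<in> {g. u g \<noteq> (\<lambda>_. 0)}. beta g (mul (beta (- g) (u g)) (v (- g + k))) x)"

definition cp_algebra_iso ::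
  "('g \<Rightarrow> ('x \<Rightarrow> 'r::comm_ring_1)) set \<Rightarrow> (('g \<Rightarrow> ('x \<Rightarrow> 'r)) \<Rightarrow> ('g \<Rightarrow> ('x \<Rightarrow> 'r)) \<Rightarrow> ('g \<Rightarrow> ('x \<Rightarrow> 'r)))
   \<Rightarrow> ('g \<Rightarrow> ('y \<Rightarrow> 'r)) set \<Rightarrow> (('g \<Rightarrow> ('y \<Rightarrow> 'r)) \<Rightarrow> ('g \<Rightarrow> ('y \<Rightarrow> 'r)) \<Rightarrow> ('g \<Rightarrow> ('y \<Rightarrow> 'r)))
   \<Rightarrow> (('g \<Rightarrow> ('x \<Rightarrow> 'r)) \<Rightarrow> ('g \<Rightarrow> ('y \<Rightarrow> 'r))) \<Rightarrow> bool" where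
  "cp_algebra_iso C1 m1 C2 m2 f \<longleftrightarrow>
     bij_betw f C1 C2 \<and>
     (\<forall>u \<in> C1. \<forall>v \<in> C1. f (cp_add u v) = cp_add (f u) (f v)) \<and>
     (\<forall>u \<in> C1. \<forall>v \<in> C1. f (m1 u v) = m2 (f u) (f v)) \<and>
     (\<forall>r. \<forall>u \<in> C1. f (cp_smul r u) = cp_smul r (f u))"

end

theory Submission imports Defs begin

lemma Q_finite: "finite E \<Longrightarrow> Q E x = (if (\<forall>h\<in>E. x h) then 1 else 0)"
  unfolding Q_def by (induction E rule: finite_induct) auto

lemma Q_un: "finite E \<Longrightarrow> finite F \<Longrightarrow> Q (E \<union> F) x = Q E x * Q F x"
  by (auto simp add: Q_finite)

lemma carrier_fin: "a \<in> A_carrier \<Longrightarrow> finite (A_supp a)"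
  by (simp add: A_carrier_def)

lemma carrier_finE: "a \<in> A_carrier \<Longrightarrow> E \<in> A_supp a \<Longrightarrow> finite E"
  by (simp add: A_carrier_def)

lemma Psi_superset: "finite S \<Longrightarrow> A_supp a \<subseteq> S \<Longrightarrow> Psi a x = (\<Sum>E\<in>S. a E * Q E x)"
  unfolding Psi_def by (rule sum.mono_neutral_left) (auto simp: A_supp_def)

lemma Psi_add: "finite (A_supp a) \<Longrightarrow> finite (A_supp b) \<Longrightarrow>
   Psi (\<lambda>E. a E + b E) x = Psi a x + Psi b x"
proof -
  assume f: "finite (A_supp a)" "finite (A_supp b)"
  let ?S = "A_supp a \<union> A_supp b"
  have s: "A_supp (\<lambda>E. a E + b E) \<subseteq> ?S" by (auto simp: A_supp_def)
  show ?thesis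
    using Psi_superset[OF _ s, of x] Psi_superset[of ?S a x] Psi_superset[of ?S b x] f
    by (simp add: sum.distrib distrib_right)
qed

lemma Psi_diff: "finite (A_supp a) \<Longrightarrow> finite (A_supp b) \<Longrightarrow>
   Psi (\<lambda>E. a E - b E) x = Psi a x - Psi b x"
proof -
  assume f: "finite (A_supp a)" "finite (A_supp b)"
  let ?S = "A_supp a \<union> A_supp b"
  have s: "A_supp (\<lambda>E. a E - b E) \<subseteq> ?S" by (auto simp: A_supp_def)
  show ?thesis
    using Psi_superset[OF _ s, of x] Psi_superset[of ?S a x] Psi_superset[of ?S b x] f
    by (simp add: sum_subtractf left_diff_distrib)
qed

lemma Psi_smul: "finite (A_supp a) \<Longrightarrow> Psi (\<lambda>E. r * a E) x = r * Psi a x"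
proof -
  assume f: "finite (A_supp a)"
  have s: "A_supp (\<lambda>E. r * a E) \<subseteq> A_supp a" by (auto simp: A_supp_def)
  show ?thesis
    using Psi_superset[OF f s, of x] f
    by (simp add: Psi_def sum_distrib_left mult.assoc)
qed

lemma Psi_zero: "Psi (\<lambda>_. 0) x = 0"
  by (simp add: Psi_def A_supp_def)

lemma carrier_add: "a \<in> A_carrier \<Longrightarrow> b \<in> A_carrier \<Longrightarrow> (\<lambda>E. a E + b E) \<in> A_carrier"
  unfolding A_carrier_def A_supp_def
  by (auto intro: rev_finite_subset[of "{E. a E \<noteq> 0} \<union> {E. b E \<noteq> 0}"]) (metis add.right_neutral diff_self add_0)+

lemma carrier_diff: "a \<in> A_carrier \<Longrightarrow> b \<in> A_carrier \<Longrightarrow> (\<lambda>E. a E - b E) \<in> A_carrier"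
  unfolding A_carrier_def A_supp_def
  by (auto intro: rev_finite_subset[of "{E. a E \<noteq> 0} \<union> {E. b E \<noteq> 0}"]) (metis add.right_neutral diff_self add_0)+

lemma carrier_smul: "a \<in> A_carrier \<Longrightarrow> (\<lambda>E. r * a E) \<in> A_carrier"
  unfolding A_carrier_def A_supp_def
  by (auto intro: rev_finite_subset[of "{E. a E \<noteq> 0}"]) (metis mult_zero_right)

lemma A_mult_supp:
  assumes "H \<in> A_supp (A_mult a b)"
  shows "\<exists>E F. E \<in> A_supp a \<and> F \<in> A_supp b \<and> H = E \<union> F"
proof (rule ccontr)
  assume "\<not> ?thesis"
  then have "{(E, F). E \<in> A_supp a \<and> F \<in> A_supp b \<and> E \<union> F = H} = {}" by auto
  then have "A_mult a b H = 0" unfolding A_mult_def by (simp only: sum.empty)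
  with assms show False by (simp add: A_supp_def)
qed

lemma A_mult_supp_sub: "A_supp (A_mult a b) \<subseteq> (\<lambda>(E,F). E \<union> F) ` (A_supp a \<times> A_supp b)"
  using A_mult_supp by fastforce

lemma carrier_mult: 
  assumes "a \<in> A_carrier" "b \<in> A_carrier" shows "A_mult a b \<in> A_carrier"
proof -
  have "finite (A_supp (A_mult a b))"
    by (rule finite_subset[OF A_mult_supp_sub]) (use assms in \<open>auto simp: A_carrier_def\<close>)
  moreover have "finite H" if "H \<in> A_supp (A_mult a b)" for H
    using A_mult_supp[OF that] assms by (auto simp: A_carrier_def)
  ultimately show ?thesis by (simp add: A_carrier_def)
qed

lemma Psi_mult:
  assumes a: "a \<in> A_carrier" and b: "b \<in> A_carrier"
  shows "Psi (A_mult a b) x = Psi a x * Psi b x"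
proof -
  let ?Sa = "A_supp a" and ?Sb = "A_supp b"
  let ?u = "\<lambda>p::'a set \<times> 'a set. fst p \<union> snd p"
  let ?U = "?u ` (?Sa \<times> ?Sb)"
  have fa: "finite ?Sa" and fb: "finite ?Sb" using a b by (auto simp: A_carrier_def)
  have fU: "finite ?U" using fa fb by auto
  have sub: "A_supp (A_mult a b) \<subseteq> ?U"
    using A_mult_supp_sub[of a b] by (auto simp: case_prod_beta)
  have setq: "{(E, F). E \<in> ?Sa \<and> F \<in> ?Sb \<and> E \<union> F = H} = {p \<in> ?Sa \<times> ?Sb. ?u p = H}" for H
    by auto
  have "Psi (A_mult a b) x = (\<Sum>H\<in>?U. A_mult a b H * Q H x)"
    by (rule Psi_superset[OF fU sub])
  also have "\<dots> = (\<Sum>H\<in>?U. \<Sum>p\<in>{p \<in> ?Sa \<times> ?Sb. ?u p = H}. a (fst p) * b (snd p) * Q (?u p) x)"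
    unfolding A_mult_def setq
    by (intro sum.cong refl) (simp add: sum_distrib_right case_prod_beta)
  also have "\<dots> = (\<Sum>p\<in>?Sa \<times> ?Sb. a (fst p) * b (snd p) * Q (?u p) x)"
    by (rule sum.group) (use fa fb in auto)
  also have "\<dots> = (\<Sum>p\<in>?Sa \<times> ?Sb. (a (fst p) * Q (fst p) x) * (b (snd p) * Q (snd p) x))"
    by (intro sum.cong refl) (use a b in \<open>auto simp: Q_un carrier_finE mult_ac\<close>)
  also have "\<dots> = Psi a x * Psi b x"
    unfolding Psi_def sum_product sum.cartesian_product by (simp add: case_prod_beta)
  finally show ?thesis .
qed


lemma tr_tr: "(\<lambda>h. - g + h) ` ((\<lambda>h. g + h) ` E) = (E::'g::ab_group_add set)"
  by (simp add: image_image)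

lemma tr_tr': "(\<lambda>h. g + h) ` ((\<lambda>h. - g + h) ` E) = (E::'g::ab_group_add set)"
  by (simp add: image_image)

lemma tr_tr2 [simp]: "(\<lambda>x. x - g) ` ((+) g ` E) = (E::'g::ab_group_add set)"
  by (simp add: image_image)

lemma tr_tr2' [simp]: "(+) g ` ((\<lambda>x. x - g) ` E) = (E::'g::ab_group_add set)"
  by (simp add: image_image)

lemma supp_alpha: "A_supp (alpha g a) = (\<lambda>E. (\<lambda>h. g + h) ` E) ` A_supp a"
proof
  show "A_supp (alpha g a) \<subseteq> (\<lambda>E. (\<lambda>h. g + h) ` E) ` A_supp a"
  proof
    fix F assume "F \<in> A_supp (alpha g a)"
    then have "(\<lambda>h. - g + h) ` F \<in> A_supp a" by (simp add: A_supp_def alpha_def)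
    moreover have "F = (\<lambda>h. g + h) ` ((\<lambda>h. - g + h) ` F)" by (simp add: tr_tr')
    ultimately show "F \<in> (\<lambda>E. (\<lambda>h. g + h) ` E) ` A_supp a" by blast
  qed
  show "(\<lambda>E. (\<lambda>h. g + h) ` E) ` A_supp a \<subseteq> A_supp (alpha g a)"
    by (auto simp: A_supp_def alpha_def tr_tr)
qed

lemma inj_tr: "inj_on (\<lambda>E. (\<lambda>h. (g::'g::ab_group_add) + h) ` E) S"
  by (rule inj_on_inverseI[where g="\<lambda>E. (\<lambda>h. - g + h) ` E"]) (simp add: tr_tr)

lemma Psi_alpha: "Psi (alpha g a) x = (\<Sum>E\<in>A_supp a. a E * Q ((\<lambda>h. g + h) ` E) x)"
  unfolding Psi_def supp_alpha
  by (subst sum.reindex[OF inj_tr]) (simp add: alpha_def tr_tr)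

lemma Q_tr: "Q ((\<lambda>h. g + h) ` E) x = Q E (phi (- g) x)"
proof -
  have "inj_on (\<lambda>h. g + h) E" by (auto simp: inj_on_def)
  then show ?thesis unfolding Q_def phi_def by (simp add: prod.reindex)
qed

lemma D_carrier: "a \<in> D g \<Longrightarrow> a \<in> A_carrier"
  by (simp add: D_def)

lemma alpha_D: assumes "a \<in> D (- g)" shows "alpha g a \<in> D g"
proof -
  have c: "a \<in> A_carrier" using assms by (simp add: D_def)
  have "finite (A_supp (alpha g a))" unfolding supp_alpha using carrier_fin[OF c] by simp
  moreover have "finite F \<and> 0 \<in> F \<and> g \<in> F" if "F \<in> A_supp (alpha g a)" for F
  proof -
    from that obtain E where E: "E \<in> A_supp a" "F = (\<lambda>h. g + h) ` E" unfolding supp_alpha by blast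
    have "finite E" "0 \<in> E" "- g \<in> E" using E(1) assms by (auto simp: D_def A_carrier_def)
    moreover have "g + 0 \<in> F" "g + - g \<in> F" using E(2) \<open>0 \<in> E\<close> \<open>- g \<in> E\<close> by blast+
    ultimately show ?thesis using E(2) by simp
  qed
  ultimately show ?thesis by (simp add: D_def A_carrier_def)
qed

lemma mult_D: assumes "a \<in> D k" "b \<in> D j" shows "A_mult a b \<in> D k"
proof -
  have "A_mult a b \<in> A_carrier" using assms by (intro carrier_mult) (auto simp: D_def)
  moreover have "0 \<in> H \<and> k \<in> H" if "H \<in> A_supp (A_mult a b)" for H
    using A_mult_supp[OF that] assms by (auto simp: D_def)
  ultimately show ?thesis by (simp add: D_def)
qed

lemma part2: assumes "a \<in> D (- g)" shows "phi_fun g (Psi a) = Psi (alpha g a)"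
proof
  fix x
  have c: "a \<in> A_carrier" using assms by (simp add: D_def)
  show "phi_fun g (Psi a) x = Psi (alpha g a) x"
  proof (cases "x \<in> Yg g")
    case True
    then show ?thesis unfolding phi_fun_def Psi_alpha Q_tr by (simp add: Psi_def)
  next
    case False
    have "a E * Q ((\<lambda>h. g + h) ` E) x = 0" if "E \<in> A_supp a" for E
    proof -
      have "finite E" "0 \<in> E" "- g \<in> E" using that assms by (auto simp: D_def A_carrier_def)
      moreover have "\<not> x 0 \<or> \<not> x g" using False by (simp add: Yg_def Y_eps_def)
      ultimately have "\<exists>h\<in>E. \<not> x (g + h)" by (metis add.right_neutral right_minus)
      then show ?thesis using \<open>finite E\<close> by (subst Q_finite) auto
    qed
    then show ?thesis using False unfolding phi_fun_def Psi_alpha by simp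
  qed
qed

lemma Psi_inj0:
  assumes c: "a \<in> A_carrier" and z: "\<And>x. Psi a x = 0"
  shows "a = (\<lambda>_. 0)"
proof (rule ccontr)
  assume ne: "a \<noteq> (\<lambda>_. 0)"
  have "A_supp a \<noteq> {}" using ne by (auto simp: A_supp_def)
  then obtain E where E: "E \<in> A_supp a" and min: "\<And>F. F \<in> A_supp a \<Longrightarrow> F \<le> E \<Longrightarrow> E = F"
    using finite_has_minimal[OF carrier_fin[OF c]] by blast
  define x where "x = (\<lambda>h. h \<in> E)"
  have "Psi a x = (\<Sum>F\<in>A_supp a. if F = E then a F else 0)"
    unfolding Psi_def
  proof (intro sum.cong refl)
    fix F assume F: "F \<in> A_supp a"
    have "finite F" using F c by (simp add: A_carrier_def)
    then have q: "a F * Q F x = (if F \<subseteq> E then a F else 0)" by (auto simp: Q_finite x_def)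
    show "a F * Q F x = (if F = E then a F else 0)"
    proof (cases "F = E")
      case True
      then show ?thesis using q by simp
    next
      case False
      then have "\<not> F \<subseteq> E" using min[OF F] by auto
      then show ?thesis using q False by simp
    qed
  qed
  also have "\<dots> = a E" using E carrier_fin[OF c] by simp
  finally have "a E = 0" using z by simp
  with E show False by (simp add: A_supp_def)
qed

lemma Psi_inj:
  assumes "a \<in> A_carrier" "b \<in> A_carrier" "Psi a = Psi b" shows "a = b"
proof -
  have "(\<lambda>E. a E - b E) = (\<lambda>_. 0)"
    by (rule Psi_inj0) (use assms in \<open>auto simp: carrier_diff Psi_diff carrier_fin\<close>)
  then show ?thesis by (simp add: fun_eq_iff)
qed

lemma part1: "is_partial_action (Y_eps :: ('g::ab_group_add \<Rightarrow> bool) set) Yg phi"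
proof -
  have b: "bij_betw (phi g) (Yg (- g)) (Yg g)" for g :: 'g
    by (rule bij_betw_byWitness[where f'="phi (- g)"])
       (auto simp: phi_def Yg_def Y_eps_def image_iff)
  have c: "phi g ` (Yg (- g) \<inter> Yg h) = Yg g \<inter> Yg (g + h)" for g h :: 'g
  proof
    show "phi g ` (Yg (- g) \<inter> Yg h) \<subseteq> Yg g \<inter> Yg (g + h)"
      by (auto simp: phi_def Yg_def Y_eps_def)
    show "Yg g \<inter> Yg (g + h) \<subseteq> phi g ` (Yg (- g) \<inter> Yg h)"
    proof
      fix y assume y: "y \<in> Yg g \<inter> Yg (g + h)"
      have "y = phi g (phi (- g) y)" by (simp add: phi_def)
      moreover have "phi (- g) y \<in> Yg (- g) \<inter> Yg h" using y by (simp add: phi_def Yg_def Y_eps_def)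
      ultimately show "y \<in> phi g ` (Yg (- g) \<inter> Yg h)" by blast
    qed
  qed
  have d: "phi g (phi h x) = phi (g + h) x" for g h :: 'g and x
    unfolding phi_def by (rule ext) (simp add: algebra_simps)
  show ?thesis unfolding is_partial_action_def
    using b c d by (auto simp: Yg_def Y_eps_def phi_def)
qed


lemma cyl_open: "finite F \<Longrightarrow> open {y::'a \<Rightarrow> bool. \<forall>h\<in>F. y h = x h}"
proof -
  assume f: "finite F"
  have "open {y::'a \<Rightarrow> bool. \<forall>h\<in>F. y (id h) \<in> {x h}}"
    by (rule product_topology_basis') (use f in \<open>auto intro: open_discrete\<close>)
  then show ?thesis by simp
qed

lemma open_cyl_sub:
  assumes "open (U::('a \<Rightarrow> bool) set)" "x \<in> U"
  shows "\<exists>F. finite F \<and> {y. \<forall>h\<in>F. y h = x h} \<subseteq> U"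
proof -
  have "openin (product_topology (\<lambda>i. euclidean) UNIV) U" using assms(1) by (simp add: open_fun_def)
  from product_topology_open_contains_basis[OF this assms(2)] obtain X where
    X: "x \<in> (\<Pi>\<^sub>E i\<in>UNIV. X i)" "finite {i. X i \<noteq> topspace euclidean}" "(\<Pi>\<^sub>E i\<in>UNIV. X i) \<subseteq> U"
    by blast
  let ?F = "{i. X i \<noteq> UNIV}"
  have "{y. \<forall>h\<in>?F. y h = x h} \<subseteq> (\<Pi>\<^sub>E i\<in>UNIV. X i)"
  proof
    fix y assume y: "y \<in> {y. \<forall>h\<in>?F. y h = x h}"
    have "y i \<in> X i" for i
    proof (cases "X i = UNIV")
      case False then show ?thesis using y X(1) by (auto simp: PiE_iff)
    qed simp
    then show "y \<in> (\<Pi>\<^sub>E i\<in>UNIV. X i)" by (simp add: PiE_iff)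
  qed
  then show ?thesis using X by (intro exI[where x="?F"]) auto
qed

lemma compact_Yg: "compact (Yg (g::'g::ab_group_add))"
proof -
  define S where "S = (\<lambda>i::'g. if i = 0 \<or> i = g then {True} else (UNIV::bool set))"
  have e: "Yg g = (\<Pi>\<^sub>E i\<in>UNIV. S i)"
    by (auto simp: Yg_def Y_eps_def S_def PiE_iff split: if_splits)
  have "compactin euclidean (S i)" for i
  proof -
    have "finite (S i)" by simp
    then have "compact (S i)" by (rule finite_imp_compact)
    then show ?thesis by (simp add: compactin_euclidean_iff)
  qed
  then have "compactin (product_topology (\<lambda>i. euclidean) UNIV) (\<Pi>\<^sub>E i\<in>UNIV. S i)"
    unfolding compactin_PiE by blast
  then show ?thesis unfolding e euclidean_product_topology compactin_euclidean_iff .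
qed

lemma Psi_CR:
  assumes a: "a \<in> D g"
  shows "Psi a \<in> C_R (Yg g)"
proof -
  have c: "a \<in> A_carrier" using a by (simp add: D_def)
  have out: "Psi a x = 0" if "x \<notin> Yg g" for x
    unfolding Psi_def
  proof (rule sum.neutral, rule ballI)
    fix E assume E: "E \<in> A_supp a"
    have "finite E" "0 \<in> E" "g \<in> E" using E a by (auto simp: D_def A_carrier_def)
    moreover have "\<not> x 0 \<or> \<not> x g" using that by (simp add: Yg_def Y_eps_def)
    ultimately have nb: "\<not> (\<forall>h\<in>E. x h)" by blast
    show "a E * Q E x = 0" by (simp only: Q_finite[OF \<open>finite E\<close>] if_not_P[OF nb] mult_zero_right)
  qed
  have lc: "\<exists>U. open U \<and> x \<in> U \<and> (\<forall>y\<in>U \<inter> Yg g. Psi a y = Psi a x)" for x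
  proof -
    let ?F = "\<Union>(A_supp a)"
    have fF: "finite ?F" using c by (auto simp: A_carrier_def)
    have "Psi a y = Psi a x" if "y \<in> {y. \<forall>h\<in>?F. y h = x h}" for y
      unfolding Psi_def
    proof (rule sum.cong[OF refl])
      fix E assume E: "E \<in> A_supp a"
      have fE: "finite E" using E c by (simp add: A_carrier_def)
      have "\<forall>h\<in>E. y h = x h" using that E by blast
      then have "(\<forall>h\<in>E. y h) = (\<forall>h\<in>E. x h)" by blast
      then show "a E * Q E y = a E * Q E x" by (simp only: Q_finite[OF fE])
    qed
    then have "\<forall>y\<in>{y. \<forall>h\<in>?F. y h = x h} \<inter> Yg g. Psi a y = Psi a x" by blast
    moreover have "open {y. \<forall>h\<in>?F. y h = x h}" by (rule cyl_open[OF fF])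
    moreover have "x \<in> {y. \<forall>h\<in>?F. y h = x h}" by simp
    ultimately show ?thesis by (intro exI[of _ "{y. \<forall>h\<in>?F. y h = x h}"] conjI)
  qed
  have k: "\<exists>K. compact K \<and> K \<subseteq> Yg g \<and> {x \<in> Yg g. Psi a x \<noteq> 0} \<subseteq> K"
    by (intro exI[of _ "Yg g"] conjI compact_Yg subset_refl) blast
  have o: "\<forall>x. x \<notin> Yg g \<longrightarrow> Psi a x = 0" using out by blast
  have l: "\<forall>x\<in>Yg g. \<exists>U. open U \<and> x \<in> U \<and> (\<forall>y\<in>U \<inter> Yg g. Psi a y = Psi a x)"
    using lc by blast
  show ?thesis unfolding C_R_def using k o l by (intro CollectI conjI)
qed

lemma dep_finite:
  assumes "\<phi> \<in> C_R X"
  shows "\<exists>F. finite F \<and> (\<forall>y\<in>X. \<forall>y'\<in>X. (\<forall>h\<in>F. y h = y' h) \<longrightarrow> \<phi> y = \<phi> y')"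
proof -
  from assms obtain K where K: "compact K" "K \<subseteq> X" "{x\<in>X. \<phi> x \<noteq> 0} \<subseteq> K"
    by (auto simp: C_R_def)
  from assms have lc: "\<forall>x\<in>X. \<exists>U. open U \<and> x \<in> U \<and> (\<forall>y\<in>U \<inter> X. \<phi> y = \<phi> x)"
    by (simp add: C_R_def)
  have "\<forall>x\<in>K. \<exists>F. finite F \<and> (\<forall>y\<in>X. (\<forall>h\<in>F. y h = x h) \<longrightarrow> \<phi> y = \<phi> x)"
  proof
    fix x assume "x \<in> K"
    then have "x \<in> X" using K by blast
    then obtain U where U: "open U" "x \<in> U" "\<forall>y\<in>U \<inter> X. \<phi> y = \<phi> x" using lc by blast
    obtain F where "finite F" "{y. \<forall>h\<in>F. y h = x h} \<subseteq> U" using open_cyl_sub[OF U(1,2)] by blast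
    then show "\<exists>F. finite F \<and> (\<forall>y\<in>X. (\<forall>h\<in>F. y h = x h) \<longrightarrow> \<phi> y = \<phi> x)"
      using U(3) by blast
  qed
  from bchoice[OF this] obtain Fx where Fx: "\<forall>x\<in>K. finite (Fx x) \<and> (\<forall>y\<in>X. (\<forall>h\<in>Fx x. y h = x h) \<longrightarrow> \<phi> y = \<phi> x)"
    by blast
  define c where "c = (\<lambda>x. {y. \<forall>h\<in>Fx x. y h = x h})"
  have op: "open (c x)" if "x \<in> K" for x unfolding c_def using Fx that cyl_open by blast
  have cov: "K \<subseteq> \<Union>(c ` K)" by (auto simp: c_def)
  obtain C where C: "C \<subseteq> K" "finite C" "K \<subseteq> \<Union>(c ` C)"
    by (rule compactE_image[OF K(1) op cov]) blast+
  define F where "F = \<Union>(Fx ` C)"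
  have "finite F" unfolding F_def
    by (intro finite_UN_I C(2)) (use Fx C(1) in blast)
  moreover have "\<phi> y = \<phi> y'" if y: "y \<in> X" "y' \<in> X" "\<forall>h\<in>F. y h = y' h" for y y'
  proof (cases "\<exists>x\<in>C. y \<in> c x \<or> y' \<in> c x")
    case True
    then obtain x where x: "x \<in> C" "y \<in> c x \<or> y' \<in> c x" by blast
    have sub: "Fx x \<subseteq> F" unfolding F_def using x(1) by blast
    have a0: "\<forall>h\<in>Fx x. y h = y' h" using sub y(3) by blast
    from x(2) have "(\<forall>h\<in>Fx x. y h = x h) \<or> (\<forall>h\<in>Fx x. y' h = x h)" unfolding c_def by blast
    then have a12: "\<forall>h\<in>Fx x. y h = x h \<and> y' h = x h" using a0 by auto
    have a1: "\<forall>h\<in>Fx x. y h = x h" and a2: "\<forall>h\<in>Fx x. y' h = x h" using a12 by blast+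
    have xK: "x \<in> K" using x(1) C(1) by blast
    have "\<phi> y = \<phi> x" using Fx xK y(1) a1 by blast
    moreover have "\<phi> y' = \<phi> x" using Fx xK y(2) a2 by blast
    ultimately show ?thesis by simp
  next
    case False
    then have "y \<notin> K" "y' \<notin> K" using C(3) by blast+
    then have "\<phi> y = 0" "\<phi> y' = 0" using K(3) y(1,2) by blast+
    then show ?thesis by simp
  qed
  ultimately show ?thesis by blast
qed

lemma P_carrier: "finite E \<Longrightarrow> P E \<in> A_carrier"
  by (auto simp: A_carrier_def A_supp_def P_def)

lemma Psi_P:
  fixes E :: "'g set" and x :: "'g \<Rightarrow> bool"
  shows "Psi (P E :: 'g set \<Rightarrow> 'r::comm_ring_1) x = Q E x"
proof -
  have "A_supp (P E :: 'g set \<Rightarrow> 'r) \<subseteq> {E}" by (auto simp: A_supp_def P_def)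
  from Psi_superset[OF _ this] show ?thesis by (simp add: P_def)
qed

lemma mult_D2: assumes "a \<in> A_carrier" "b \<in> D k" shows "A_mult a b \<in> D k"
proof -
  have "A_mult a b \<in> A_carrier" using assms by (intro carrier_mult) (auto simp: D_def)
  moreover have "0 \<in> H \<and> k \<in> H" if "H \<in> A_supp (A_mult a b)" for H
    using A_mult_supp[OF that] assms by (auto simp: D_def)
  ultimately show ?thesis by (simp add: D_def)
qed

lemma D_add: "a \<in> D k \<Longrightarrow> b \<in> D k \<Longrightarrow> (\<lambda>E. a E + b E) \<in> D k"
  using carrier_add[of a b] by (auto simp: D_def A_supp_def) (metis add_0)+

lemma D_diff: "a \<in> D k \<Longrightarrow> b \<in> D k \<Longrightarrow> (\<lambda>E. a E - b E) \<in> D k"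
  using carrier_diff[of a b] by (auto simp: D_def A_supp_def) metis+

lemma surj_aux:
  fixes g :: "'g::ab_group_add"
  assumes "finite F"
  shows "\<forall>\<phi>::('g \<Rightarrow> bool) \<Rightarrow> 'r::comm_ring_1. (\<forall>y. y \<notin> Yg g \<longrightarrow> \<phi> y = 0) \<and>
           (\<forall>y y'. (\<forall>h\<in>F \<union> {0, g}. y h = y' h) \<longrightarrow> \<phi> y = \<phi> y') \<longrightarrow> (\<exists>a\<in>D g. Psi a = \<phi>)"
  using assms
proof (induction F rule: finite_induct)
  case empty
  show ?case
  proof (intro allI impI)
    fix \<phi> :: "('g \<Rightarrow> bool) \<Rightarrow> 'r"
    assume H: "(\<forall>y. y \<notin> Yg g \<longrightarrow> \<phi> y = 0) \<and> (\<forall>y y'. (\<forall>h\<in>{} \<union> {0, g}. y h = y' h) \<longrightarrow> \<phi> y = \<phi> y')"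
    note H1 = conjunct1[OF H, rule_format] and H2 = conjunct2[OF H, rule_format]
    define c where "c = \<phi> (\<lambda>_. True)"
    define a where "a = (\<lambda>E. if E = {0, g} then c else (0::'r))"
    have supp: "A_supp a \<subseteq> {{0, g}}" by (auto simp: A_supp_def a_def)
    have fs: "finite (A_supp a)" using finite_subset[OF supp] by simp
    have "\<forall>E\<in>A_supp a. finite E \<and> 0 \<in> E \<and> g \<in> E" using supp by blast
    then have "a \<in> D g" using fs by (simp add: D_def A_carrier_def)
    moreover have "Psi a y = \<phi> y" for y
    proof -
      have "Psi a y = c * Q {0, g} y" using Psi_superset[OF _ supp, of y] by (simp add: a_def)
      also have "\<dots> = (if y 0 \<and> y g then c else 0)" by (simp add: Q_finite)
      also have "\<dots> = \<phi> y"
      proof (cases "y 0 \<and> y g")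
        case True
        then have "\<phi> y = c" unfolding c_def using H2[of y "\<lambda>_. True"] by auto
        then show ?thesis using True by simp
      next
        case False
        then have "y \<notin> Yg g" by (simp add: Yg_def Y_eps_def)
        then have "\<phi> y = 0" by (rule H1)
        then show ?thesis using False by auto
      qed
      finally show ?thesis .
    qed
    ultimately show "\<exists>a\<in>D g. Psi a = \<phi>" by blast
  qed
next
  case (insert h F)
  show ?case
  proof (intro allI impI)
    fix \<phi> :: "('g \<Rightarrow> bool) \<Rightarrow> 'r"
    assume H: "(\<forall>y. y \<notin> Yg g \<longrightarrow> \<phi> y = 0) \<and> (\<forall>y y'. (\<forall>h\<in>insert h F \<union> {0, g}. y h = y' h) \<longrightarrow> \<phi> y = \<phi> y')"
    note H1 = conjunct1[OF H, rule_format]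
    have H2: "\<phi> y = \<phi> y'" if "\<forall>h\<in>insert h F \<union> {0, g}. y h = y' h" for y y'
      using conjunct2[OF H] that by blast
    show "\<exists>a\<in>D g. Psi a = \<phi>"
    proof (cases "h = 0 \<or> h = g")
      case True
      then have eq: "insert h F \<union> {0, g} = F \<union> {0, g}" by auto
      have "\<phi> y = \<phi> y'" if "\<forall>h\<in>F \<union> {0, g}. y h = y' h" for y y'
        by (rule H2) (unfold eq, rule that)
      then show ?thesis using insert.IH conjunct1[OF H] by blast
    next
      case False
      define \<phi>1 where "\<phi>1 = (\<lambda>y. \<phi> (y(h := True)))"
      define \<phi>0 where "\<phi>0 = (\<lambda>y. \<phi> (y(h := False)))"
      have Y: "y(h := b) \<in> Yg g \<longleftrightarrow> y \<in> Yg g" for y :: "'g \<Rightarrow> bool" and b :: bool using False by (auto simp: Yg_def Y_eps_def)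
      have ag: "\<forall>k\<in>insert h F \<union> {0, g}. (y(h := b)) k = (y'(h := b)) k"
        if "\<forall>k\<in>F \<union> {0, g}. y k = y' k" for y y' :: "'g \<Rightarrow> bool" and b :: bool using that by auto
      have "\<exists>a\<in>D g. Psi a = \<phi>1"
      proof (rule insert.IH[rule_format], intro conjI allI impI)
        fix y assume "y \<notin> Yg g" then show "\<phi>1 y = 0" unfolding \<phi>1_def by (intro H1) (simp add: Y)
      next
        fix y y' :: "'g \<Rightarrow> bool" assume "\<forall>k\<in>F \<union> {0, g}. y k = y' k"
        then show "\<phi>1 y = \<phi>1 y'" unfolding \<phi>1_def by (rule H2[OF ag])
      qed
      then obtain a1 where a1: "a1 \<in> D g" "Psi a1 = \<phi>1" by blast
      have "\<exists>a\<in>D g. Psi a = \<phi>0"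
      proof (rule insert.IH[rule_format], intro conjI allI impI)
        fix y assume "y \<notin> Yg g" then show "\<phi>0 y = 0" unfolding \<phi>0_def by (intro H1) (simp add: Y)
      next
        fix y y' :: "'g \<Rightarrow> bool" assume "\<forall>k\<in>F \<union> {0, g}. y k = y' k"
        then show "\<phi>0 y = \<phi>0 y'" unfolding \<phi>0_def by (rule H2[OF ag])
      qed
      then obtain a0 where a0: "a0 \<in> D g" "Psi a0 = \<phi>0" by blast
      define p where "p = (P {h} :: 'g set \<Rightarrow> 'r)"
      have pc: "p \<in> A_carrier" by (simp add: p_def P_carrier)
      define a where "a = (\<lambda>E. (\<lambda>E. A_mult p a1 E + a0 E) E - A_mult p a0 E)"
      have m1: "A_mult p a1 \<in> D g" and m0: "A_mult p a0 \<in> D g"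
        using mult_D2[OF pc a1(1)] mult_D2[OF pc a0(1)] by auto
      have aD: "a \<in> D g" unfolding a_def by (intro D_diff D_add m1 m0 a0(1))
      have "Psi a y = \<phi> y" for y
      proof -
        have cs: "a1 \<in> A_carrier" "a0 \<in> A_carrier" "A_mult p a1 \<in> A_carrier" "A_mult p a0 \<in> A_carrier"
          "(\<lambda>E. A_mult p a1 E + a0 E) \<in> A_carrier"
          using a1 a0 m1 m0 by (auto simp: D_def intro: carrier_add)
        have pP: "Psi p y = Q {h} y" unfolding p_def by (rule Psi_P)
        have "Psi a y = Psi (\<lambda>E. A_mult p a1 E + a0 E) y - Psi (A_mult p a0) y"
          unfolding a_def by (rule Psi_diff) (use cs in \<open>auto intro: carrier_fin\<close>)
        also have "\<dots> = Psi (A_mult p a1) y + Psi a0 y - Psi (A_mult p a0) y"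
          by (subst Psi_add) (use cs in \<open>auto intro: carrier_fin\<close>)
        also have "\<dots> = Q {h} y * \<phi>1 y + \<phi>0 y - Q {h} y * \<phi>0 y"
          using Psi_mult[OF pc cs(1), of y] Psi_mult[OF pc cs(2), of y] pP a1(2) a0(2) by simp
        also have "\<dots> = \<phi> y"
          by (cases "y h") (simp_all add: Q_finite \<phi>1_def \<phi>0_def fun_upd_idem)
        finally show ?thesis .
      qed
      then show ?thesis using aD by blast
    qed
  qed
qed

lemma Psi_surj:
  assumes "\<phi> \<in> C_R (Yg g)"
  shows "\<exists>a\<in>D g. Psi a = \<phi>"
proof -
  obtain F where F: "finite F" "\<forall>y\<in>Yg g. \<forall>y'\<in>Yg g. (\<forall>h\<in>F. y h = y' h) \<longrightarrow> \<phi> y = \<phi> y'"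
    using dep_finite[OF assms] by blast
  have out: "\<forall>y. y \<notin> Yg g \<longrightarrow> \<phi> y = 0" using assms by (simp add: C_R_def)
  have dep: "\<forall>y y'. (\<forall>h\<in>F \<union> {0, g}. y h = y' h) \<longrightarrow> \<phi> y = \<phi> y'"
  proof (intro allI impI)
    fix y y' :: "'a \<Rightarrow> bool" assume that: "\<forall>h\<in>F \<union> {0, g}. y h = y' h"
    show "\<phi> y = \<phi> y'"
    proof (cases "y \<in> Yg g")
      case True
      then have "y' \<in> Yg g" using that by (auto simp: Yg_def Y_eps_def)
      moreover have "\<forall>h\<in>F. y h = y' h" using that by blast
      ultimately show ?thesis using F(2) True by blast
    next
      case False
      then have "y' \<notin> Yg g" using that by (auto simp: Yg_def Y_eps_def)
      then show ?thesis using out False by simp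
    qed
  qed
  show ?thesis by (rule surj_aux[OF F(1), rule_format]) (use out dep in blast)
qed

lemma carrier_sum: "finite I \<Longrightarrow> (\<forall>i\<in>I. b i \<in> A_carrier) \<Longrightarrow> (\<lambda>E. \<Sum>i\<in>I. b i E) \<in> A_carrier"
proof (induction I rule: finite_induct)
  case empty
  then show ?case by (simp add: A_carrier_def A_supp_def)
next
  case (insert i I)
  then show ?case using carrier_add[of "b i" "\<lambda>E. \<Sum>i\<in>I. b i E"] by simp
qed

lemma Psi_sum: "finite I \<Longrightarrow> (\<forall>i\<in>I. b i \<in> A_carrier) \<Longrightarrow>
   Psi (\<lambda>E. \<Sum>i\<in>I. b i E) x = (\<Sum>i\<in>I. Psi (b i) x)"
proof (induction I rule: finite_induct)
  case empty
  then show ?case using Psi_zero by simp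
next
  case (insert i I)
  have c: "(\<lambda>E. \<Sum>i\<in>I. b i E) \<in> A_carrier" by (rule carrier_sum) (use insert in auto)
  have "Psi (\<lambda>E. \<Sum>i\<in>insert i I. b i E) x = Psi (\<lambda>E. b i E + (\<Sum>i\<in>I. b i E)) x"
    using insert by simp
  also have "\<dots> = Psi (b i) x + Psi (\<lambda>E. \<Sum>i\<in>I. b i E) x"
    by (rule Psi_add) (use insert c in \<open>auto intro: carrier_fin\<close>)
  finally show ?case using insert by simp
qed

lemma D_zero: "(\<lambda>_. 0) \<in> D g"
  by (simp add: D_def A_carrier_def A_supp_def)

lemma Psi_zero_fun: "Psi (\<lambda>_. 0) = (\<lambda>_. 0)"
  using Psi_zero by blast

theorem mainTheorem13:
  fixes G_ty :: "'g::ab_group_add itself" and R_ty :: "'r::comm_ring_1 itself"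
  shows "is_partial_action (Y_eps :: ('g \<Rightarrow> bool) set) Yg phi
    \<and> (\<forall>g::'g. \<forall>a \<in> (D (- g) :: ('g set \<Rightarrow> 'r) set). phi_fun g (Psi a) = Psi (alpha g a))
    \<and> (\<exists>f. cp_algebra_iso
            (cp_carrier (D :: 'g \<Rightarrow> ('g set \<Rightarrow> 'r) set)) (cp_mult A_mult alpha)
            (cp_carrier (\<lambda>g::'g. (C_R (Yg g) :: (('g \<Rightarrow> bool) \<Rightarrow> 'r) set))) (cp_mult fun_mult phi_fun)
            f)"
proof (intro conjI)
  show "is_partial_action (Y_eps :: ('g \<Rightarrow> bool) set) Yg phi" by (rule part1)
  show "\<forall>g::'g. \<forall>a \<in> (D (- g) :: ('g set \<Rightarrow> 'r) set). phi_fun g (Psi a) = Psi (alpha g a)"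
    using part2 by blast
  define f where "f = (\<lambda>(u::'g \<Rightarrow> 'g set \<Rightarrow> 'r) g. Psi (u g))"
  let ?C1 = "cp_carrier (D :: 'g \<Rightarrow> ('g set \<Rightarrow> 'r) set)"
  let ?C2 = "cp_carrier (\<lambda>g::'g. (C_R (Yg g) :: (('g \<Rightarrow> bool) \<Rightarrow> 'r) set))"
  have C1: "u g \<in> D g" if "u \<in> ?C1" for u g using that by (simp add: cp_carrier_def)
  have C1c: "u g \<in> A_carrier" if "u \<in> ?C1" for u g using C1[OF that] by (rule D_carrier)
  have supp_eq: "{g. Psi (u g) \<noteq> (\<lambda>_. 0)} = {g. u g \<noteq> (\<lambda>_. 0)}" if "u \<in> ?C1" for u
  proof -
    have "Psi (u g) = (\<lambda>_. 0) \<longleftrightarrow> u g = (\<lambda>_. 0)" for g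
    proof
      assume a: "Psi (u g) = (\<lambda>_. 0)"
      have z: "(\<lambda>_. 0) \<in> (A_carrier :: ('g set \<Rightarrow> 'r) set)" by (simp add: A_carrier_def A_supp_def)
      have "Psi (u g) = Psi (\<lambda>_. 0 :: 'r)" unfolding a by (rule ext, rule Psi_zero[symmetric])
      then show "u g = (\<lambda>_. 0)" by (rule Psi_inj[OF C1c[OF that] z])
    qed (simp add: Psi_zero_fun)
    then show ?thesis by blast
  qed
  have inj: "inj_on f ?C1"
  proof (rule inj_onI)
    fix u v assume u: "u \<in> ?C1" and v: "v \<in> ?C1" and e: "f u = f v"
    show "u = v"
    proof
      fix g
      have "Psi (u g) = Psi (v g)" using e unfolding f_def by (rule fun_cong)
      then show "u g = v g" by (rule Psi_inj[OF C1c[OF u] C1c[OF v]])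
    qed
  qed
  have img1: "f ` ?C1 \<subseteq> ?C2"
  proof
    fix w assume "w \<in> f ` ?C1"
    then obtain u where u: "u \<in> ?C1" and w: "w = f u" by blast
    have "finite {g. u g \<noteq> (\<lambda>_. 0)}" using u by (simp add: cp_carrier_def)
    then have "finite {g. w g \<noteq> (\<lambda>_. 0)}" using supp_eq[OF u] unfolding w f_def by simp
    moreover have "\<forall>g. w g \<in> C_R (Yg g)" unfolding w f_def using Psi_CR C1[OF u] by blast
    ultimately show "w \<in> ?C2" by (simp add: cp_carrier_def)
  qed
  have img2: "?C2 \<subseteq> f ` ?C1"
  proof
    fix w assume w: "w \<in> ?C2"
    define u where "u = (\<lambda>g. if w g = (\<lambda>_. 0) then (\<lambda>_. 0) else (SOME a. a \<in> D g \<and> Psi a = w g))"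
    have ug: "u g \<in> D g \<and> Psi (u g) = w g" for g
    proof (cases "w g = (\<lambda>_. 0)")
      case True
      then show ?thesis by (simp add: u_def D_zero Psi_zero_fun)
    next
      case False
      have "w g \<in> C_R (Yg g)" using w by (simp add: cp_carrier_def)
      then have "\<exists>a. a \<in> D g \<and> Psi a = w g" using Psi_surj by blast
      then have "(SOME a. a \<in> D g \<and> Psi a = w g) \<in> D g \<and> Psi (SOME a. a \<in> D g \<and> Psi a = w g) = w g"
        by (rule someI_ex)
      then show ?thesis using False unfolding u_def by simp
    qed
    have "{g. u g \<noteq> (\<lambda>_. 0)} \<subseteq> {g. w g \<noteq> (\<lambda>_. 0)}" by (auto simp: u_def)
    moreover have "finite {g. w g \<noteq> (\<lambda>_. 0)}" using w by (simp add: cp_carrier_def)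
    ultimately have "finite {g. u g \<noteq> (\<lambda>_. 0)}" by (rule finite_subset)
    then have "u \<in> ?C1" using ug by (simp add: cp_carrier_def)
    moreover have "w = f u" unfolding f_def using ug by auto
    ultimately show "w \<in> f ` ?C1" by blast
  qed
  have add: "f (cp_add u v) = cp_add (f u) (f v)" if "u \<in> ?C1" "v \<in> ?C1" for u v
    unfolding f_def cp_add_def
    by (intro ext Psi_add carrier_fin C1c that)
  have smul: "f (cp_smul r u) = cp_smul r (f u)" if "u \<in> ?C1" for r u
    unfolding f_def cp_smul_def
    by (intro ext Psi_smul carrier_fin C1c that)
  have mult: "f (cp_mult A_mult alpha u v) = cp_mult fun_mult phi_fun (f u) (f v)"
    if u: "u \<in> ?C1" and v: "v \<in> ?C1" for u v
  proof (rule ext)+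
    fix k x
    let ?S = "{g. u g \<noteq> (\<lambda>_. 0)}"
    have fS: "finite ?S" using u by (simp add: cp_carrier_def)
    define m where "m = (\<lambda>g. A_mult (alpha (- g) (u g)) (v (- g + k)))"
    have ad: "alpha (- g) (u g) \<in> D (- g)" for g using alpha_D[of "u g" "- g"] C1[OF u] by simp
    have mD: "m g \<in> D (- g)" for g unfolding m_def by (rule mult_D[OF ad C1[OF v]])
    have bD: "alpha g (m g) \<in> D g" for g using alpha_D[OF mD] .
    have tm: "Psi (alpha g (m g)) x = phi_fun g (fun_mult (phi_fun (- g) (Psi (u g))) (Psi (v (- g + k)))) x" for g
    proof -
      have "Psi (alpha g (m g)) = phi_fun g (Psi (m g))" using part2[OF mD] by simp
      moreover have "Psi (m g) = fun_mult (Psi (alpha (- g) (u g))) (Psi (v (- g + k)))"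
        unfolding m_def fun_mult_def
        by (intro ext Psi_mult D_carrier[OF ad] C1c[OF v])
      moreover have "Psi (alpha (- g) (u g)) = phi_fun (- g) (Psi (u g))"
        using part2[of "u g" "- g"] C1[OF u] by simp
      ultimately show ?thesis by simp
    qed
    have "f (cp_mult A_mult alpha u v) k x = Psi (\<lambda>E. \<Sum>g\<in>?S. alpha g (m g) E) x"
      unfolding f_def cp_mult_def m_def by simp
    also have "\<dots> = (\<Sum>g\<in>?S. Psi (alpha g (m g)) x)"
      by (rule Psi_sum[OF fS]) (use bD D_carrier in blast)
    also have "\<dots> = (\<Sum>g\<in>?S. phi_fun g (fun_mult (phi_fun (- g) (Psi (u g))) (Psi (v (- g + k)))) x)"
      using tm by simp
    also have "\<dots> = cp_mult fun_mult phi_fun (f u) (f v) k x"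
      unfolding cp_mult_def f_def using supp_eq[OF u] by simp
    finally show "f (cp_mult A_mult alpha u v) k x = cp_mult fun_mult phi_fun (f u) (f v) k x" .
  qed
  have "cp_algebra_iso ?C1 (cp_mult A_mult alpha) ?C2 (cp_mult fun_mult phi_fun) f"
    unfolding cp_algebra_iso_def bij_betw_def
    using inj img1 img2 add smul mult by blast
  then show "\<exists>f. cp_algebra_iso ?C1 (cp_mult A_mult alpha) ?C2 (cp_mult fun_mult phi_fun) f" by blast
qed

end
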